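(* Let $m\geq 15$ and $k\geq 1$ be integers and let $c(x)=1+\sum_{j\in\{1,2,3,7\}}(x^j+x^{m-j})\in\mathbb{F}_2[x]$. Then $\gcd(c(x^k),x^m-1)=1$ if and only if $\gcd(m,3k)=\gcd(m,5k)=\gcd(m,7k)=\gcd(m,k)$.
   Context: All polynomials are over $\mathbb{F}_2$. *)

theory Defs
  imports "HOL-Library.Z2" "HOL-Computational_Algebra.Polynomial_Factorial" "HOL-Computational_Algebra.Field_as_Ring"
begin

text \<open>Make the field F_2 (type bit from HOL-Library.Z2) a Euclidean ring with gcd,
  in the same way HOL-Computational_Algebra.Field_as_Ring does for real/rat/complex,
  so that gcd on bit poly is available.\<close>

instantiation bit ::
  "{unique_euclidean_ring, normalization_euclidean_semiring, normalization_semidom_multiplicative}"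
begin

definition [simp]: "normalize_bit = (normalize_field :: bit \<Rightarrow> _)"
definition [simp]: "unit_factor_bit = (unit_factor_field :: bit \<Rightarrow> _)"
definition [simp]: "euclidean_size_bit = (euclidean_size_field :: bit \<Rightarrow> _)"
definition [simp]: "division_segment (x :: bit) = 1"

lemma bit_mod_field: "(a::bit) mod b = (if b = 0 then a else 0)"
  by (cases b) simp_all

instance
  by standard
    (simp_all add: dvd_field_iff field_split_simps bit_mod_field split: if_splits)

end

instantiation bit :: euclidean_ring_gcd
begin

definition gcd_bit :: "bit \<Rightarrow> bit \<Rightarrow> bit" where "gcd_bit = Euclidean_Algorithm.gcd"
definition lcm_bit :: "bit \<Rightarrow> bit \<Rightarrow> bit" where "lcm_bit = Euclidean_Algorithm.lcm"
definition Gcd_bit :: "bit set \<Rightarrow> bit" where "Gcd_bit = Euclidean_Algorithm.Gcd"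
definition Lcm_bit :: "bit set \<Rightarrow> bit" where "Lcm_bit = Euclidean_Algorithm.Lcm"

instance by standard (simp_all add: gcd_bit_def lcm_bit_def Gcd_bit_def Lcm_bit_def)

end

instance bit :: field_gcd ..

definition cpoly :: "nat \<Rightarrow> bit poly" where
  "cpoly m = 1 + (\<Sum>j\<in>{1,2,3,7::nat}. monom 1 j + monom 1 (m - j))"

end

theory Submission imports Defs begin


lemma pcompose_monom1: "pcompose (monom (1::'a::comm_ring_1) n) q = q ^ n"
  by (induction n) (simp_all add: monom_0 monom_Suc pcompose_pCons one_pCons)

lemma monom_power1: "(monom (1::'a::comm_ring_1) k) ^ n = monom 1 (k*n)"
  by (induction n) (simp_all add: mult_monom algebra_simps monom_0 one_pCons)

lemma xm1_split: "b \<le> a \<Longrightarrow> monom (1::'a::comm_ring_1) a - 1 = monom 1 (a-b) * (monom 1 b - 1) + (monom 1 (a-b) - 1)"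
  by (simp add: algebra_simps mult_monom)

lemma xm1_step:
  assumes "b \<le> a"
  shows "(d dvd monom (1::'a::comm_ring_1) a - 1 \<and> d dvd monom 1 b - 1) \<longleftrightarrow> (d dvd monom 1 (a-b) - 1 \<and> d dvd monom 1 b - 1)"
proof -
  have e: "monom (1::'a) a - 1 = monom 1 (a-b) * (monom 1 b - 1) + (monom 1 (a-b) - 1)"
    using xm1_split[OF assms] .
  show ?thesis
  proof
    assume h: "d dvd monom 1 a - 1 \<and> d dvd monom 1 b - 1"
    then have "d dvd monom 1 (a-b) * (monom 1 b - 1)" by simp
    then show "d dvd monom 1 (a-b) - 1 \<and> d dvd monom 1 b - 1" using h e
      by (metis dvd_add_right_iff)
  next
    assume h: "d dvd monom 1 (a-b) - 1 \<and> d dvd monom 1 b - 1"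
    then show "d dvd monom 1 a - 1 \<and> d dvd monom 1 b - 1" using e by (metis dvd_add dvd_mult)
  qed
qed

lemma xm1_dvd_iff:
  "(d dvd monom (1::'a::comm_ring_1) a - 1 \<and> d dvd monom 1 b - 1) \<longleftrightarrow> d dvd monom 1 (gcd a b) - 1"
proof (induction "a+b" arbitrary: a b rule: less_induct)
  case less
  show ?case
  proof (cases "a = 0 \<or> b = 0")
    case True then show ?thesis by (auto simp: monom_0 one_pCons)
  next
    case False
    show ?thesis
    proof (cases "b \<le> a")
      case True
      have IH: "(d dvd monom (1::'a) (a-b) - 1 \<and> d dvd monom 1 b - 1) \<longleftrightarrow> d dvd monom 1 (gcd (a-b) b) - 1"
        using False True by (intro less) auto
      show ?thesis using IH xm1_step[OF True, of d] gcd_diff1_nat[OF True] by simp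
    next
      case F2: False
      have le: "a \<le> b" using F2 by simp
      have IH: "(d dvd monom (1::'a) (b-a) - 1 \<and> d dvd monom 1 a - 1) \<longleftrightarrow> d dvd monom 1 (gcd (b-a) a) - 1"
        using False F2 by (intro less) auto
      have g: "gcd (b-a) a = gcd a b" using gcd_diff1_nat[OF le] by (simp add: gcd.commute)
      have "(d dvd monom (1::'a) a - 1 \<and> d dvd monom 1 b - 1) = (d dvd monom 1 b - 1 \<and> d dvd monom 1 a - 1)" by blast
      also have "\<dots> = (d dvd monom 1 (b-a) - 1 \<and> d dvd monom 1 a - 1)" by (rule xm1_step[OF le])
      also have "\<dots> = (d dvd monom 1 (gcd (b-a) a) - 1)" by (rule IH)
      finally show ?thesis using g by simp
    qed
  qed
qed



definition phi :: "nat \<Rightarrow> 'a::comm_ring_1 poly" where "phi p = (\<Sum>i<p. monom 1 i)"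

lemma phi_mult: "(monom 1 1 - 1) * phi p = monom (1::'a::comm_ring_1) p - 1"
  by (induction p) (simp_all add: phi_def algebra_simps mult_monom)

lemma phi_comp: "pcompose (phi p) (monom 1 k) * (monom 1 k - 1) = monom (1::'a::comm_ring_1) (p*k) - 1"
proof -
  have "pcompose ((monom 1 1 - 1) * phi p) (monom (1::'a) k) = pcompose (monom 1 p - 1) (monom 1 k)"
    by (simp only: phi_mult)
  then show ?thesis
    by (simp add: pcompose_mult pcompose_diff pcompose_monom1 pcompose_1 monom_power1 mult.commute)
qed

lemma phi_rem:
  assumes "poly (phi p :: 'a::comm_ring_1 poly) 1 = 1"
  shows "\<exists>q. pcompose (phi p) (monom (1::'a) k) = (monom 1 k - 1) * q + 1"
proof -
  have e: "[:-1, 1:] * synthetic_div (phi p) 1 + [:1:] = (phi p :: 'a poly)"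
    by (metis synthetic_div_correct' assms)
  have m1: "[:-1:] = (-1 :: 'a poly)" by (simp add: one_pCons)
  have "pcompose [:-1, 1:] (monom (1::'a) k) = monom 1 k - 1"
    by (simp add: pcompose_pCons m1)
  then have "pcompose (phi p) (monom (1::'a) k) = (monom 1 k - 1) * pcompose (synthetic_div (phi p) 1) (monom 1 k) + 1"
    by (metis e pcompose_add pcompose_mult pcompose_const one_pCons)
  then show ?thesis by blast
qed

lemma coprime_dvd_r: "coprime a b \<Longrightarrow> c dvd b \<Longrightarrow> coprime a c"
  by (meson coprime_def dvd_trans)

lemma degree_xm1: "e > 0 \<Longrightarrow> degree (monom 1 e - (1::bit poly)) = e"
  unfolding diff_conv_add_uminus by (subst degree_add_eq_left) (simp_all add: degree_monom_eq)

lemma phi_coprime: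
  fixes p m k :: nat
  assumes ph: "poly (phi p :: bit poly) 1 = 1" and m: "m > 0"
  shows "coprime (pcompose (phi p) (monom 1 k)) (monom 1 m - (1::bit poly)) \<longleftrightarrow> gcd m (p*k) = gcd m k"
proof
  define P :: "bit poly" where "P = pcompose (phi p) (monom 1 k)"
  assume cp: "coprime (pcompose (phi p) (monom 1 k)) (monom 1 m - (1::bit poly))"
  define e where "e = gcd m (p*k)"
  define f where "f = gcd m k"
  define E :: "bit poly" where "E = monom 1 e - 1"
  have "E dvd monom 1 m - 1 \<and> E dvd monom 1 (p*k) - 1"
    using xm1_dvd_iff[of E m "p*k"] by (simp add: E_def e_def)
  then have E1: "E dvd monom 1 m - 1" and E2: "E dvd P * (monom 1 k - 1)"
    unfolding P_def phi_comp by simp_all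
  have "coprime E P" using coprime_dvd_r[OF cp E1] by (simp add: P_def coprime_commute)
  then have "E dvd monom 1 k - 1" using E2 coprime_dvd_mult_right_iff by blast
  then have "E dvd monom 1 f - 1" using xm1_dvd_iff[of E m k] E1 by (simp add: f_def)
  moreover have fpos: "f > 0" using m by (simp add: f_def)
  moreover have epos: "e > 0" using m by (simp add: e_def)
  ultimately have "e \<le> f"
    using dvd_imp_degree_le[of E "monom 1 f - 1"] degree_xm1[of e] degree_xm1[of f]
    by (auto simp: E_def monom_eq_1_iff)
  moreover have "f dvd e" by (simp add: f_def e_def)
  ultimately have "e = f" using epos by (simp add: dvd_imp_le le_antisym)
  then show "gcd m (p*k) = gcd m k" by (simp add: e_def f_def)
next
  assume g: "gcd m (p*k) = gcd m k"
  obtain q where q: "pcompose (phi p) (monom 1 k) = (monom 1 k - 1) * q + (1::bit poly)"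
    using phi_rem[OF ph] by blast
  show "coprime (pcompose (phi p) (monom 1 k)) (monom 1 m - (1::bit poly))"
  proof (rule coprimeI)
    fix d :: "bit poly"
    assume d1: "d dvd pcompose (phi p) (monom 1 k)" and d2: "d dvd monom 1 m - 1"
    have "d dvd monom 1 (p*k) - 1" using d1 phi_comp[of p k] by (metis dvd_mult2)
    then have "d dvd monom 1 (gcd m k) - 1" using xm1_dvd_iff[of d "p*k" m] d2 g
      by (simp add: gcd.commute)
    moreover have "monom 1 (gcd m k) - 1 dvd monom 1 k - (1::bit poly)"
      by (metis dvd_refl gcd.commute xm1_dvd_iff)
    ultimately have "d dvd monom 1 k - 1" by (rule dvd_trans)
    then have "d dvd 1" using d1 q by (metis dvd_add_right_iff dvd_mult2)
    then show "is_unit d" .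
  qed
qed

lemma phi3: "poly (phi 3 :: bit poly) 1 = 1" by (simp add: phi_def poly_sum poly_monom)
lemma phi5: "poly (phi 5 :: bit poly) 1 = 1" by (simp add: phi_def poly_sum poly_monom)
lemma phi7: "poly (phi 7 :: bit poly) 1 = 1" by (simp add: phi_def poly_sum poly_monom)



lemma G_eq: "phi 3 * phi 3 * phi 5 * phi 7 = (1 + monom 1 4 + monom 1 5 + monom 1 6 + monom 1 7 + monom 1 8 + monom 1 9 + monom 1 10 + monom 1 14 :: bit poly)"
  by code_simp

lemma cpoly_id:
  assumes "m \<ge> 15"
  shows "monom 1 7 * cpoly m = (1 + monom 1 4 + monom 1 5 + monom 1 6 + monom 1 7 + monom 1 8 + monom 1 9 + monom 1 10 + monom 1 14 :: bit poly)
     + (1 + monom 1 4 + monom 1 5 + monom 1 6) * (monom 1 m - 1)"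
proof -
  have e: "monom 1 7 * monom (1::bit) (m - j) = monom 1 (7 + m - j)" if "j \<le> 7" for j
    using that assms by (simp add: mult_monom)
  show ?thesis
    using assms
    by (auto simp: cpoly_def algebra_simps mult_monom e poly_eq_iff coeff_monom)
qed



lemma coprime_add_multM: "coprime (a + c * M) M \<longleftrightarrow> coprime a (M::bit poly)"
  by (metis coprime_iff_gcd_eq_1 gcd.commute gcd_add_mult add.commute)

lemma coprime_x_M:
  assumes "m > 0"
  shows "coprime (monom 1 1) (monom 1 m - (1::bit poly))"
proof (rule coprimeI)
  fix d :: "bit poly"
  assume d1: "d dvd monom 1 1" and d2: "d dvd monom 1 m - 1"
  have "monom 1 1 * monom 1 (m - 1) = (monom 1 m :: bit poly)"
    using assms by (simp add: mult_monom)
  then have "d dvd monom 1 m" using d1 by (metis dvd_mult2)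
  then have "d dvd monom 1 m - (monom 1 m - 1)" using d2 by (rule dvd_diff)
  then show "is_unit d" by simp
qed

theorem proposition7:
  fixes m k :: nat
  assumes "m \<ge> 15" and "k \<ge> 1"
  shows "gcd (pcompose (cpoly m) (monom 1 k)) (monom 1 m - 1) = 1 \<longleftrightarrow>
         (gcd m (3*k) = gcd m k \<and> gcd m (5*k) = gcd m k \<and> gcd m (7*k) = gcd m k)"
proof -
  let ?K = "monom 1 k :: bit poly"
  let ?M = "monom 1 m - (1::bit poly)"
  define h :: "bit poly" where "h = 1 + monom 1 4 + monom 1 5 + monom 1 6"
  have m0: "m > 0" using assms by simp
  have id: "monom 1 7 * cpoly m = phi 3 * phi 3 * phi 5 * phi 7 + h * (monom 1 m - 1)"
    using cpoly_id[OF assms(1)] G_eq by (simp add: h_def)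
  have comp: "monom 1 (7*k) * pcompose (cpoly m) ?K
      = pcompose (phi 3 * phi 3 * phi 5 * phi 7) ?K + pcompose h ?K * (monom 1 (m*k) - 1)"
    using arg_cong[OF id, of "\<lambda>p. pcompose p ?K"]
    by (simp add: pcompose_mult pcompose_add pcompose_diff pcompose_monom1 monom_power1 pcompose_1 mult.commute[of k])
  have "?M dvd monom 1 (m*k) - 1"
    using xm1_dvd_iff[of ?M "m*k" m] by simp
  then obtain t where t: "monom 1 (m*k) - 1 = ?M * t" by blast
  have cx: "coprime (monom 1 (7*k)) ?M"
    using coprime_x_M[OF m0] monom_power1[of 1 "7*k", where 'a=bit]
    by (metis coprime_power_left_iff mult_1)
  have "gcd (pcompose (cpoly m) ?K) ?M = 1 \<longleftrightarrow> coprime (pcompose (cpoly m) ?K) ?M"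
    by (simp add: coprime_iff_gcd_eq_1)
  also have "\<dots> \<longleftrightarrow> coprime (monom 1 (7*k) * pcompose (cpoly m) ?K) ?M"
    using cx by simp
  also have "\<dots> \<longleftrightarrow> coprime (pcompose (phi 3 * phi 3 * phi 5 * phi 7) ?K) ?M"
  proof -
    have eq: "pcompose h ?K * (?M * t) = (pcompose h ?K * t) * ?M" by (simp add: ac_simps)
    show ?thesis by (simp only: comp t eq coprime_add_multM)
  qed
  also have "\<dots> \<longleftrightarrow> coprime (pcompose (phi 3) ?K) ?M \<and> coprime (pcompose (phi 5) ?K) ?M
       \<and> coprime (pcompose (phi 7) ?K) ?M"
    by (simp add: pcompose_mult)
  also have "\<dots> \<longleftrightarrow> (gcd m (3*k) = gcd m k \<and> gcd m (5*k) = gcd m k \<and> gcd m (7*k) = gcd m k)"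
    using phi_coprime[OF phi3 m0, of k] phi_coprime[OF phi5 m0, of k] phi_coprime[OF phi7 m0, of k]
    by simp
  finally show ?thesis .
qed

end
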